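(* Let $I=(\mathcal{M},[N],(u_i)_{i\in[N]})$ be a non-negative instance, $\lambda\ge0$, $\varepsilon>0$, and suppose the $\lambda$-max-min problem for $I$ has a solution. Let $0<\alpha<1$, $0<\beta<1$ with $\alpha\beta>1-\varepsilon$. For each $i$ let $c_i$ be any real with $\alpha\cdot MmS_{u_i}^N(\mathcal{M})\le c_i\le MmS_{u_i}^N(\mathcal{M})$, and let $[N]_{>0}:=\{i: c_i>0\}$. If $[N]_{>0}=\emptyset$, let $S^\varepsilon$ be any allocation. Otherwise let $u_i'(j):=u_i(j)/c_i$ for $i\in[N]_{>0}$, let $\lambda^*:=\max\{\min_{i\in[N]_{>0}}u_i'(S_i): (S_i)_{i\in[N]_{>0}}\text{ a partition of }\mathcal{M}\text{ indexed by }[N]_{>0}\}$, let $(S^\varepsilon_i)_{i\in[N]_{>0}}$ be any partition of $\mathcal{M}$ indexed by $[N]_{>0}$ with $u_i'(S^\varepsilon_i)\ge\beta\lambda^*$ for all $i\in[N]_{>0}$, and set $S^\varepsilon_i:=\emptyset$ for $i\notin[N]_{>0}$. Then $S^\varepsilon=(S^\varepsilon_1,\dots,S^\varepsilon_N)$ is a solution of the $((1-\varepsilon)\lambda)$-max-min problem for $I$, i.e. $u_i(S^\varepsilon_i)\ge(1-\varepsilon)\lambda\cdot MmS_{u_i}^N(\mathcal{M})$ for all $i$.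
   Context: A non-negative instance: finite item set $\mathcal{M}$, agents $[N]=\{1,\dots,N\}$, additive utilities $u_i$ with $u_i(j)\ge0$. $\Pi_N(\mathcal{M})$ is the set of ordered $N$-partitions of $\mathcal{M}$ (parts may be empty). $MmS_{u}^N(\mathcal{M}):=\max_{(S_1,\ldots,S_N)\in\Pi_N(\mathcal{M})}\min_{j} u(S_j)$. An allocation $S$ solves the $\mu$-max-min problem for $I$ iff $u_i(S_i)\ge\mu\cdot MmS_{u_i}^N(\mathcal{M})$ for all $i$. *)

theory Defs
  imports Main "HOL.Real"
begin

text \<open>Values of S outside K are irrelevant.\<close>
definition is_partition :: "nat set \<Rightarrow> 'a set \<Rightarrow> (nat \<Rightarrow> 'a set) \<Rightarrow> bool" where
  "is_partition K M S \<longleftrightarrow>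
     (\<forall>i\<in>K. S i \<subseteq> M) \<and> (\<Union>i\<in>K. S i) = M \<and>
     (\<forall>i\<in>K. \<forall>j\<in>K. i \<noteq> j \<longrightarrow> S i \<inter> S j = {})"

definition maxmin_val :: "nat set \<Rightarrow> 'a set \<Rightarrow> (nat \<Rightarrow> 'a \<Rightarrow> real) \<Rightarrow> real" where
  "maxmin_val K M v = Max {Min ((\<lambda>i. sum (v i) (S i)) ` K) | S. is_partition K M S}"

definition MmS :: "('a \<Rightarrow> real) \<Rightarrow> nat \<Rightarrow> 'a set \<Rightarrow> real" where
  "MmS u N M = maxmin_val {1..N} M (\<lambda>_. u)"

definition solves_maxmin :: "real \<Rightarrow> 'a set \<Rightarrow> nat \<Rightarrow> (nat \<Rightarrow> 'a \<Rightarrow> real) \<Rightarrow> (nat \<Rightarrow> 'a set) \<Rightarrow> bool" where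
  "solves_maxmin \<mu> M N u S \<longleftrightarrow>
     is_partition {1..N} M S \<and> (\<forall>i\<in>{1..N}. sum (u i) (S i) \<ge> \<mu> * MmS (u i) N M)"

end

theory Submission
  imports Defs "HOL-Library.FuncSet"
begin

lemma maxmin_finite:
  assumes "finite K" "finite M"
  shows "finite {Min ((\<lambda>i. sum (v i) (S i)) ` K) | S. is_partition K M S}"
proof -
  have "{Min ((\<lambda>i. sum (v i) (S i)) ` K) | S. is_partition K M S}
     \<subseteq> (\<lambda>T. Min ((\<lambda>i. sum (v i) (T i)) ` K)) ` (PiE K (\<lambda>_. Pow M))"
  proof
    fix x assume "x \<in> {Min ((\<lambda>i. sum (v i) (S i)) ` K) | S. is_partition K M S}"
    then obtain S where x: "x = Min ((\<lambda>i. sum (v i) (S i)) ` K)" and p: "is_partition K M S" by blast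
    have "restrict S K \<in> PiE K (\<lambda>_. Pow M)" using p unfolding is_partition_def by auto
    moreover have "x = Min ((\<lambda>i. sum (v i) (restrict S K i)) ` K)" using x by simp
    ultimately show "x \<in> (\<lambda>T. Min ((\<lambda>i. sum (v i) (T i)) ` K)) ` (PiE K (\<lambda>_. Pow M))" by blast
  qed
  moreover have "finite (PiE K (\<lambda>_. Pow M))" using assms by (simp add: finite_PiE)
  ultimately show ?thesis by (meson finite_surj)
qed

lemma maxmin_ge:
  assumes "finite K" "finite M" "is_partition K M S"
  shows "Min ((\<lambda>i. sum (v i) (S i)) ` K) \<le> maxmin_val K M v"
  unfolding maxmin_val_def
  apply (rule Max_ge)
  using maxmin_finite[OF assms(1,2)] assms(3) by blast+

theorem theorem3:
  fixes M :: "'a set" and N :: nat and u :: "nat \<Rightarrow> 'a \<Rightarrow> real"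
    and lam eps alpha beta :: real and c :: "nat \<Rightarrow> real"
    and P :: "nat set" and lam_star :: real
  assumes finM: "finite M"
    and nonneg: "\<forall>i\<in>{1..N}. \<forall>j\<in>M. u i j \<ge> 0"
    and lam: "lam \<ge> 0" and eps: "eps > 0"
    and sol: "\<exists>S. solves_maxmin lam M N u S"
    and alpha: "0 < alpha" "alpha < 1" and beta: "0 < beta" "beta < 1"
    and ab: "alpha * beta > 1 - eps"
    and c: "\<forall>i\<in>{1..N}. alpha * MmS (u i) N M \<le> c i \<and> c i \<le> MmS (u i) N M"
    and P_def: "P = {i\<in>{1..N}. c i > 0}"
    and lam_star_def: "lam_star = maxmin_val P M (\<lambda>i j. u i j / c i)"
  shows "\<forall>Se. ((P = {} \<and> is_partition {1..N} M Se) \<or>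
              (P \<noteq> {} \<and> is_partition P M Se \<and>
               (\<forall>i\<in>P. sum (\<lambda>j. u i j / c i) (Se i) \<ge> beta * lam_star) \<and>
               (\<forall>i\<in>{1..N} - P. Se i = {})))
           \<longrightarrow> solves_maxmin ((1 - eps) * lam) M N u Se"
proof (intro allI impI)
  fix Se
  assume H: "(P = {} \<and> is_partition {1..N} M Se) \<or>
              (P \<noteq> {} \<and> is_partition P M Se \<and>
               (\<forall>i\<in>P. sum (\<lambda>j. u i j / c i) (Se i) \<ge> beta * lam_star) \<and>
               (\<forall>i\<in>{1..N} - P. Se i = {}))"
  have Mge: "MmS (u i) N M \<ge> 0" if "i \<in> {1..N}" for i
  proof -
    have "alpha * MmS (u i) N M \<le> MmS (u i) N M" using c that by fastforce
    hence "(1 - alpha) * MmS (u i) N M \<ge> 0" by (simp add: algebra_simps)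
    thus ?thesis using alpha by (simp add: zero_le_mult_iff)
  qed
  have Mz: "MmS (u i) N M = 0" if "i \<in> {1..N}" "i \<notin> P" for i
  proof -
    have "c i \<le> 0" using that P_def by auto
    hence "alpha * MmS (u i) N M \<le> 0" using c that by fastforce
    hence "MmS (u i) N M \<le> 0" using alpha by (simp add: mult_le_0_iff)
    thus ?thesis using Mge[OF that(1)] by linarith
  qed
  have sumge: "sum (u i) A \<ge> 0" if "i \<in> {1..N}" "A \<subseteq> M" for i A
    using nonneg that by (intro sum_nonneg) auto
  have PN: "P \<subseteq> {1..N}" using P_def by auto
  show "solves_maxmin ((1 - eps) * lam) M N u Se"
  proof (cases "P = {}")
    case True
    with H have p: "is_partition {1..N} M Se" by auto
    show ?thesis unfolding solves_maxmin_def
    proof (intro conjI p ballI)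
      fix i assume i: "i \<in> {1..N}"
      have "Se i \<subseteq> M" using p i unfolding is_partition_def by auto
      then show "sum (u i) (Se i) \<ge> (1 - eps) * lam * MmS (u i) N M"
        using Mz[OF i] True sumge[OF i] by simp
    qed
  next
    case False
    with H have p: "is_partition P M Se"
      and bnd: "\<forall>i\<in>P. sum (\<lambda>j. u i j / c i) (Se i) \<ge> beta * lam_star"
      and out: "\<forall>i\<in>{1..N} - P. Se i = {}" by auto
    obtain S where S: "solves_maxmin lam M N u S" using sol by blast
    have Sp: "is_partition {1..N} M S" and Sv: "\<forall>i\<in>{1..N}. sum (u i) (S i) \<ge> lam * MmS (u i) N M"
      using S unfolding solves_maxmin_def by auto
    obtain p0 where p0: "p0 \<in> P" using False by blast
    define T where "T i = (if i = p0 then S i \<union> (\<Union>j\<in>{1..N}-P. S j) else S i)" for i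
    have Tp: "is_partition P M T"
    proof -
      have a: "\<forall>i\<in>{1..N}. S i \<subseteq> M" "(\<Union>i\<in>{1..N}. S i) = M"
        "\<forall>i\<in>{1..N}. \<forall>j\<in>{1..N}. i \<noteq> j \<longrightarrow> S i \<inter> S j = {}"
        using Sp unfolding is_partition_def by auto
      have "(\<Union>i\<in>P. T i) = (\<Union>i\<in>{1..N}. S i)"
        using PN p0 unfolding T_def by (auto split: if_splits)
      moreover have "\<forall>i\<in>P. T i \<subseteq> M" using a PN unfolding T_def by auto
      moreover have "\<forall>i\<in>P. \<forall>j\<in>P. i \<noteq> j \<longrightarrow> T i \<inter> T j = {}"
      proof (intro ballI impI)
        fix i j assume ij: "i \<in> P" "j \<in> P" "i \<noteq> j"
        show "T i \<inter> T j = {}"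
        proof -
          have dis: "S x \<inter> S y = {}" if "x \<in> {1..N}" "y \<in> {1..N}" "x \<noteq> y" for x y
            using a(3) that by blast
          have ijN: "i \<in> {1..N}" "j \<in> {1..N}" using ij PN by auto
          have D: "S k \<inter> (\<Union>m\<in>{1..N}-P. S m) = {}" if "k \<in> P" for k
            using dis that PN by blast
          show ?thesis unfolding T_def
            using dis[OF ijN ij(3)] D[OF ij(1)] D[OF ij(2)] ij(3) by auto
        qed
      qed
      ultimately show ?thesis unfolding is_partition_def using a(2) by auto
    qed
    have finP: "finite P" using PN finite_subset by blast
    have "Min ((\<lambda>i. sum (\<lambda>j. u i j / c i) (T i)) ` P) \<ge> lam"
    proof -
      have "\<forall>i\<in>P. sum (\<lambda>j. u i j / c i) (T i) \<ge> lam"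
      proof
        fix i assume iP: "i \<in> P"
        have i: "i \<in> {1..N}" and ci: "c i > 0" using iP P_def by auto
        have cle: "c i \<le> MmS (u i) N M" using c i by auto
        have TM: "T i \<subseteq> M" using Tp iP unfolding is_partition_def by auto
        have ST: "S i \<subseteq> T i" unfolding T_def by auto
        have "sum (u i) (S i) \<le> sum (u i) (T i)"
          using TM ST finM nonneg i by (intro sum_mono2) (auto intro: finite_subset)
        moreover have "lam * c i \<le> lam * MmS (u i) N M" using cle lam by (simp add: mult_left_mono)
        ultimately have "lam * c i \<le> sum (u i) (T i)" using Sv i by fastforce
        hence "lam \<le> sum (u i) (T i) / c i" using ci by (simp add: pos_le_divide_eq)
        thus "sum (\<lambda>j. u i j / c i) (T i) \<ge> lam" by (simp add: sum_divide_distrib)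
      qed
      thus ?thesis using finP False by (subst Min_ge_iff) auto
    qed
    also have "\<dots> \<le> lam_star" unfolding lam_star_def using maxmin_ge[OF finP finM Tp] .
    finally have ls: "lam \<le> lam_star" .
    show ?thesis unfolding solves_maxmin_def
    proof (intro conjI ballI)
      show "is_partition {1..N} M Se"
      proof -
        have a: "\<forall>i\<in>P. Se i \<subseteq> M" "(\<Union>i\<in>P. Se i) = M"
          "\<forall>i\<in>P. \<forall>j\<in>P. i \<noteq> j \<longrightarrow> Se i \<inter> Se j = {}"
          using p unfolding is_partition_def by auto
        have "(\<Union>i\<in>{1..N}. Se i) = (\<Union>i\<in>P. Se i)"
          using out PN by blast
        moreover have "\<forall>i\<in>{1..N}. Se i \<subseteq> M" using a(1) out by blast
        moreover have "\<forall>i\<in>{1..N}. \<forall>j\<in>{1..N}. i \<noteq> j \<longrightarrow> Se i \<inter> Se j = {}"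
          using a(3) out by blast
        ultimately show ?thesis unfolding is_partition_def using a(2) by simp
      qed
    next
      fix i assume i: "i \<in> {1..N}"
      show "sum (u i) (Se i) \<ge> (1 - eps) * lam * MmS (u i) N M"
      proof (cases "i \<in> P")
        case False
        thus ?thesis using Mz[OF i False] out i by simp
      next
        case True
        have ci: "c i > 0" using True P_def by auto
        have ac: "alpha * MmS (u i) N M \<le> c i" using c i by auto
        have m0: "MmS (u i) N M \<ge> 0" using Mge[OF i] .
        have "beta * lam \<le> beta * lam_star" using ls beta by simp
        also have "\<dots> \<le> sum (u i) (Se i) / c i" using bnd True by (simp add: sum_divide_distrib)
        finally have "c i * (beta * lam) \<le> sum (u i) (Se i)" using ci by (simp add: pos_le_divide_eq mult.commute)
        moreover have "(alpha * MmS (u i) N M) * (beta * lam) \<le> c i * (beta * lam)"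
          using ac beta lam by (intro mult_right_mono) auto
        moreover have "(1 - eps) * (lam * MmS (u i) N M) \<le> (alpha * beta) * (lam * MmS (u i) N M)"
          using ab lam m0 by (intro mult_right_mono) auto
        ultimately show ?thesis by (simp add: algebra_simps)
      qed
    qed
  qed
qed

end
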